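(* Let $L$ be a finite lattice. Then $\mathsf{C}(L)=\mathsf{Pol}_{0,1}(L)$ if and only if, for each join-irreducible element $a\in L$, the function $\chi_a$ is a (unary) polynomial of $L$.
   Context: $L$ is a finite lattice with least element $0$ and greatest element $1$. An $n$-ary aggregation function on $L$ ($n\ge 1$) is a map $A:L^n\to L$ that is nondecreasing in the componentwise order ($\mathbf x\le\mathbf y$ implies $A(\mathbf x)\le A(\mathbf y)$) and satisfies $A(0,\dots,0)=0$, $A(1,\dots,1)=1$. $\mathsf{C}(L)$ is the set of all aggregation functions on $L$ (of all arities). An $n$-ary polynomial on $L$ is any function $L^n\to L$ obtained in finitely many steps from projections and constant functions by pointwise joins and meets; $\mathsf{Pol}_{0,1}(L)$ is the set of polynomials $p$ (of arity $\ge1$) with $p(0,\dots,0)=0$ and $p(1,\dots,1)=1$. For $a\in L$, $\chi_a:L\to L$ is defined by $\chi_a(x)=1$ if $x\ge a$ and $x\ne 0$, and $\chi_a(x)=0$ otherwise. An element $a$ is join-irreducible if $a\neq 0$ and $a=b\vee c$ implies $a=b$ or $a=c$. *)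

theory Defs
  imports Main
begin

text \<open>An n-ary function on L is modelled as a function on lists; only its values on
lists of length n matter. The finite lattice L is a type of class
finite + bounded_lattice, with 0 = bot and 1 = top.\<close>

definition aggregation :: "nat \<Rightarrow> ('a::{finite,bounded_lattice} list \<Rightarrow> 'a) \<Rightarrow> bool" where
  "aggregation n A \<longleftrightarrow>
     (\<forall>xs ys. length xs = n \<longrightarrow> length ys = n \<longrightarrow> list_all2 (\<le>) xs ys \<longrightarrow> A xs \<le> A ys)
     \<and> A (replicate n bot) = bot \<and> A (replicate n top) = top"

inductive is_poly :: "nat \<Rightarrow> ('a::{finite,bounded_lattice} list \<Rightarrow> 'a) \<Rightarrow> bool" for n where
  proj: "i < n \<Longrightarrow> is_poly n (\<lambda>xs. xs ! i)"
| const: "is_poly n (\<lambda>xs. c)"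
| join: "is_poly n p \<Longrightarrow> is_poly n q \<Longrightarrow> is_poly n (\<lambda>xs. sup (p xs) (q xs))"
| meet: "is_poly n p \<Longrightarrow> is_poly n q \<Longrightarrow> is_poly n (\<lambda>xs. inf (p xs) (q xs))"

definition polynomial :: "nat \<Rightarrow> ('a::{finite,bounded_lattice} list \<Rightarrow> 'a) \<Rightarrow> bool" where
  "polynomial n f \<longleftrightarrow> (\<exists>p. is_poly n p \<and> (\<forall>xs. length xs = n \<longrightarrow> f xs = p xs))"

definition pol01 :: "nat \<Rightarrow> ('a::{finite,bounded_lattice} list \<Rightarrow> 'a) \<Rightarrow> bool" where
  "pol01 n f \<longleftrightarrow> polynomial n f \<and> f (replicate n bot) = bot \<and> f (replicate n top) = top"

definition chi :: "'a::{finite,bounded_lattice} \<Rightarrow> 'a \<Rightarrow> 'a" where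
  "chi a x = (if a \<le> x \<and> x \<noteq> bot then top else bot)"

definition join_irreducible :: "'a::{finite,bounded_lattice} \<Rightarrow> bool" where
  "join_irreducible a \<longleftrightarrow> a \<noteq> bot \<and> (\<forall>b c. a = sup b c \<longrightarrow> a = b \<or> a = c)"

end

theory Submission
  imports Defs
begin

lemma poly_glb:
  assumes "finite S" "\<forall>s\<in>S. is_poly n (f s)"
  shows "\<exists>p. is_poly n p \<and> (\<forall>xs. (\<forall>s\<in>S. p xs \<le> f s xs) \<and> (\<forall>u. (\<forall>s\<in>S. u \<le> f s xs) \<longrightarrow> u \<le> p xs))"
  using assms
proof (induction S rule: finite_induct)
  case empty
  show ?case by (rule exI[of _ "\<lambda>_. top"]) (auto intro: is_poly.const)
next
  case (insert x F)
  then obtain p where p: "is_poly n p" "\<forall>xs. (\<forall>s\<in>F. p xs \<le> f s xs) \<and> (\<forall>u. (\<forall>s\<in>F. u \<le> f s xs) \<longrightarrow> u \<le> p xs)"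
    by auto
  show ?case
    apply (rule exI[of _ "\<lambda>xs. inf (f x xs) (p xs)"])
    using p insert.prems by (auto intro: is_poly.meet le_infI2)
qed

lemma poly_lub:
  assumes "finite S" "\<forall>s\<in>S. is_poly n (f s)"
  shows "\<exists>p. is_poly n p \<and> (\<forall>xs. (\<forall>s\<in>S. f s xs \<le> p xs) \<and> (\<forall>u. (\<forall>s\<in>S. f s xs \<le> u) \<longrightarrow> p xs \<le> u))"
  using assms
proof (induction S rule: finite_induct)
  case empty
  show ?case by (rule exI[of _ "\<lambda>_. bot"]) (auto intro: is_poly.const)
next
  case (insert x F)
  then obtain p where p: "is_poly n p" "\<forall>xs. (\<forall>s\<in>F. f s xs \<le> p xs) \<and> (\<forall>u. (\<forall>s\<in>F. f s xs \<le> u) \<longrightarrow> p xs \<le> u)"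
    by auto
  show ?case
    apply (rule exI[of _ "\<lambda>xs. sup (f x xs) (p xs)"])
    using p insert.prems by (auto intro: is_poly.join le_supI2)
qed

lemma poly_subst:
  assumes "is_poly 1 p" "i < n"
  shows "is_poly n (\<lambda>xs. p [xs!i])"
  using assms
proof (induction rule: is_poly.induct)
  case (proj j)
  then have "(\<lambda>xs. [xs!i] ! j) = (\<lambda>xs::'a list. xs!i)" by auto
  then show ?case using proj by (simp add: is_poly.proj)
next
  case (const c) show ?case by (rule is_poly.const)
next
  case (join p q) then show ?case by (auto intro: is_poly.join)
next
  case (meet p q) then show ?case by (auto intro: is_poly.meet)
qed

lemma poly_mono:
  assumes "is_poly n p" "length xs = n" "list_all2 (\<le>) xs ys"
  shows "p xs \<le> p ys"
  using assms
proof (induction rule: is_poly.induct)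
  case (proj i) then show ?case by (auto simp: list_all2_nthD)
next
  case (const c) then show ?case by simp
next
  case (join p q) then have "p xs \<le> p ys" "q xs \<le> q ys" by auto
  then show ?case by (rule sup_mono)
next
  case (meet p q) then have "p xs \<le> p ys" "q xs \<le> q ys" by auto
  then show ?case by (rule inf_mono)
qed

lemma ji_below:
  fixes x :: "'a::{finite,bounded_lattice}"
  shows "(\<forall>j. join_irreducible j \<and> j \<le> c \<longrightarrow> j \<le> x) \<longrightarrow> c \<le> x"
proof (induction "card {y. y < c}" arbitrary: c rule: less_induct)
  case less
  show ?case
  proof
    assume H: "\<forall>j. join_irreducible j \<and> j \<le> c \<longrightarrow> j \<le> x"
    show "c \<le> x"
    proof (cases "c = bot")
      case True then show ?thesis by simp
    next
      case False
      show ?thesis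
      proof (cases "join_irreducible c")
        case True then show ?thesis using H by auto
      next
        case nj: False
        then obtain b d where bd: "c = sup b d" "c \<noteq> b" "c \<noteq> d"
          using False unfolding join_irreducible_def by auto
        have lt: "b < c" "d < c" using bd by (auto simp: less_le)
        have cardlt: "card {y. y < e} < card {y. y < c}" if "e < c" for e
        proof (rule psubset_card_mono)
          show "finite {y. y < c}" by simp
          show "{y. y < e} \<subset> {y. y < c}" using that
            by (auto intro: less_trans)
        qed
        have "b \<le> x" using less[OF cardlt[OF lt(1)]] H lt(1) by (meson less_imp_le order_trans)
        moreover have "d \<le> x" using less[OF cardlt[OF lt(2)]] H lt(2) by (meson less_imp_le order_trans)
        ultimately show ?thesis using bd by simp
      qed
    qed
  qed
qed

lemma delta_poly:
  fixes c :: "'a::{finite,bounded_lattice}"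
  assumes H: "\<forall>a :: 'a. join_irreducible a \<longrightarrow> polynomial 1 (\<lambda>xs. chi a (hd xs))"
    and i: "i < n"
  shows "\<exists>p. is_poly n p \<and> (\<forall>xs. p xs = (if c \<le> xs!i then top else bot))"
proof -
  let ?J = "{j. join_irreducible j \<and> j \<le> c}"
  have ex: "\<forall>j::'a. \<exists>q. join_irreducible j \<longrightarrow> is_poly 1 q \<and> (\<forall>xs. length xs = 1 \<longrightarrow> chi j (hd xs) = q xs)"
  proof
    fix j :: 'a show "\<exists>q. join_irreducible j \<longrightarrow> is_poly 1 q \<and> (\<forall>xs. length xs = 1 \<longrightarrow> chi j (hd xs) = q xs)"
    proof (cases "join_irreducible j")
      case True then show ?thesis using H unfolding polynomial_def by auto
    qed simp
  qed
  obtain Q where Q0: "\<forall>j::'a. join_irreducible j \<longrightarrow> is_poly 1 (Q j) \<and> (\<forall>xs. length xs = 1 \<longrightarrow> chi j (hd xs) = Q j xs)"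
    using choice[OF ex] by blast
  have Q: "\<And>j::'a. join_irreducible j \<Longrightarrow> is_poly 1 (Q j) \<and> (\<forall>xs. length xs = 1 \<longrightarrow> chi j (hd xs) = Q j xs)"
    using Q0 by blast
  have fJ: "finite ?J" by simp
  have "\<forall>j\<in>?J. is_poly n (\<lambda>xs. Q j [xs!i])" using Q poly_subst i by blast
  from poly_glb[OF fJ this] obtain p where p: "is_poly n p"
    "\<forall>xs. (\<forall>j\<in>?J. p xs \<le> Q j [xs!i]) \<and> (\<forall>u. (\<forall>j\<in>?J. u \<le> Q j [xs!i]) \<longrightarrow> u \<le> p xs)"
    by blast
  have ev: "Q j [xs!i] = chi j (xs!i)" if "j \<in> ?J" for j xs
  proof -
    have "join_irreducible j" using that by simp
    then have "\<forall>xs. length xs = 1 \<longrightarrow> chi j (hd xs) = Q j xs" using Q by blast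
    then have "chi j (hd [xs!i]) = Q j [xs!i]" by (metis One_nat_def length_Cons list.size(3))
    then show ?thesis by simp
  qed
  have "p xs = (if c \<le> xs!i then top else bot)" for xs
  proof (cases "c \<le> xs!i")
    case True
    have "\<forall>j\<in>?J. top \<le> Q j [xs!i]"
    proof
      fix j assume jJ: "j \<in> ?J"
      then have "j \<le> xs!i" "j \<noteq> bot" using True unfolding join_irreducible_def by auto
      then have "xs!i \<noteq> bot" by (metis bot_unique)
      then show "top \<le> Q j [xs!i]" using ev[OF jJ] \<open>j \<le> xs!i\<close> by (simp add: chi_def)
    qed
    then have "top \<le> p xs" using p(2) by blast
    then show ?thesis using True by (simp add: top_unique)
  next
    case False
    then obtain j where jJ: "j \<in> ?J" and nj: "\<not> j \<le> xs!i" using ji_below[of c "xs!i"] by blast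
    have "p xs \<le> Q j [xs!i]" using p(2) jJ by blast
    also have "\<dots> = bot" using ev[OF jJ] nj by (simp add: chi_def)
    finally show ?thesis using False by (simp add: bot_unique)
  qed
  then show ?thesis using p(1) by blast
qed

lemma agg_poly:
  fixes A :: "'a::{finite,bounded_lattice} list \<Rightarrow> 'a"
  assumes H: "\<forall>a :: 'a. join_irreducible a \<longrightarrow> polynomial 1 (\<lambda>xs. chi a (hd xs))"
    and ag: "aggregation n A"
  shows "polynomial n A"
proof -
  have exD: "\<forall>ic. \<exists>p. fst ic < n \<longrightarrow> is_poly n p \<and> (\<forall>xs. p xs = (if (snd ic::'a) \<le> xs!(fst ic) then top else bot))"
    using delta_poly[OF H] by blast
  obtain D' where D': "\<forall>ic. fst ic < n \<longrightarrow> is_poly n (D' ic) \<and> (\<forall>xs. D' ic xs = (if (snd ic::'a) \<le> xs!(fst ic) then top else bot))"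
    using choice[OF exD] by blast
  define D where "D i c = D' (i, c)" for i c
  have D: "\<And>i c. i < n \<Longrightarrow> is_poly n (D i c) \<and> (\<forall>xs. D i c xs = (if (c::'a) \<le> xs!i then top else bot))"
    using D' unfolding D_def by (metis fst_conv snd_conv)
  have "\<forall>cs. \<exists>g. is_poly n g \<and> (\<forall>xs. (\<forall>i\<in>{..<n}. g xs \<le> D i (cs!i) xs) \<and> (\<forall>u. (\<forall>i\<in>{..<n}. u \<le> D i (cs!i) xs) \<longrightarrow> u \<le> g xs))"
  proof
    fix cs :: "'a list"
    show "\<exists>g. is_poly n g \<and> (\<forall>xs. (\<forall>i\<in>{..<n}. g xs \<le> D i (cs!i) xs) \<and> (\<forall>u. (\<forall>i\<in>{..<n}. u \<le> D i (cs!i) xs) \<longrightarrow> u \<le> g xs))"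
      apply (rule poly_glb) apply simp using D by blast
  qed
  from choice[OF this] obtain G where G0: "\<forall>cs. is_poly n (G cs) \<and> (\<forall>xs. (\<forall>i\<in>{..<n}. G cs xs \<le> D i (cs!i) xs) \<and> (\<forall>u. (\<forall>i\<in>{..<n}. u \<le> D i (cs!i) xs) \<longrightarrow> u \<le> G cs xs))"
    by blast
  have G: "\<And>cs. is_poly n (G cs)"
    "\<And>cs xs. (\<forall>i\<in>{..<n}. G cs xs \<le> D i (cs!i) xs) \<and> (\<forall>u. (\<forall>i\<in>{..<n}. u \<le> D i (cs!i) xs) \<longrightarrow> u \<le> G cs xs)"
    using G0 by blast+
  have Gtop: "G cs xs = top" if "\<forall>i<n. cs!i \<le> xs!i" for cs xs
  proof -
    have "\<forall>u. u \<le> G cs xs" using G(2)[of cs xs] D that by simp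
    then have "top \<le> G cs xs" by blast
    then show ?thesis by (rule top_unique[THEN iffD1])
  qed
  have Gbot: "G cs xs = bot" if "i < n" "\<not> cs!i \<le> xs!i" for cs xs i
  proof -
    have "G cs xs \<le> D i (cs!i) xs" using G(2)[of cs xs] that by auto
    then show ?thesis using D[of i] that by (simp add: bot_unique)
  qed
  let ?C = "{cs::'a list. length cs = n}"
  have fC: "finite ?C" using finite_lists_length_eq[of "UNIV::'a set" n] by simp
  have "\<forall>cs\<in>?C. is_poly n (\<lambda>xs. inf (A cs) (G cs xs))"
    using G(1) by (auto intro: is_poly.meet is_poly.const)
  from poly_lub[OF fC this] obtain P where P: "is_poly n P"
    "\<forall>xs. (\<forall>cs\<in>?C. inf (A cs) (G cs xs) \<le> P xs) \<and> (\<forall>u. (\<forall>cs\<in>?C. inf (A cs) (G cs xs) \<le> u) \<longrightarrow> P xs \<le> u)"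
    by blast
  have mono: "\<And>xs ys. length xs = n \<Longrightarrow> length ys = n \<Longrightarrow> list_all2 (\<le>) xs ys \<Longrightarrow> A xs \<le> A ys"
    using ag unfolding aggregation_def by blast
  have "A xs = P xs" if len: "length xs = n" for xs
  proof (rule antisym)
    have "inf (A xs) (G xs xs) \<le> P xs" using P(2) len by auto
    then show "A xs \<le> P xs" using Gtop[of xs xs] by simp
  next
    have "\<forall>cs\<in>?C. inf (A cs) (G cs xs) \<le> A xs"
    proof
      fix cs assume cs: "cs \<in> ?C"
      show "inf (A cs) (G cs xs) \<le> A xs"
      proof (cases "\<forall>i<n. cs!i \<le> xs!i")
        case True
        then have "list_all2 (\<le>) cs xs" using cs len by (simp add: list_all2_conv_all_nth)
        then have "A cs \<le> A xs" using mono cs len by simp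
        then show ?thesis by (simp add: le_infI1)
      next
        case False
        then obtain i where "i < n" "\<not> cs!i \<le> xs!i" by blast
        then have "G cs xs = bot" by (rule Gbot)
        then show ?thesis by simp
      qed
    qed
    then show "P xs \<le> A xs" using P(2) by blast
  qed
  then show ?thesis unfolding polynomial_def using P(1) by blast
qed

theorem mainTheorem2:
  shows "(\<forall>n\<ge>1. \<forall>f :: 'a::{finite,bounded_lattice} list \<Rightarrow> 'a.
            aggregation n f \<longleftrightarrow> pol01 n f)
     \<longleftrightarrow> (\<forall>a :: 'a. join_irreducible a \<longrightarrow> polynomial 1 (\<lambda>xs. chi a (hd xs)))"
proof
  assume L: "\<forall>n\<ge>1. \<forall>f :: 'a list \<Rightarrow> 'a. aggregation n f \<longleftrightarrow> pol01 n f"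
  show "\<forall>a :: 'a. join_irreducible a \<longrightarrow> polynomial 1 (\<lambda>xs. chi a (hd xs))"
  proof (intro allI impI)
    fix a :: 'a assume ja: "join_irreducible a"
    then have nb: "a \<noteq> bot" unfolding join_irreducible_def by auto
    then have tb: "top \<noteq> (bot::'a)" by (metis bot_unique top_greatest)
    have "aggregation 1 (\<lambda>xs. chi a (hd xs))"
      unfolding aggregation_def
    proof (intro conjI allI impI)
      fix xs ys :: "'a list"
      assume "length xs = 1" "length ys = 1" "list_all2 (\<le>) xs ys"
      then obtain x y where "xs = [x]" "ys = [y]" "x \<le> y"
        by (metis One_nat_def length_0_conv length_Suc_conv list_all2_Cons)
      then show "chi a (hd xs) \<le> chi a (hd ys)"
        unfolding chi_def by (auto simp: bot_unique dest: order_trans)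
    qed (use tb in \<open>auto simp: chi_def\<close>)
    then have "pol01 1 (\<lambda>xs. chi a (hd xs))" using L by auto
    then show "polynomial 1 (\<lambda>xs. chi a (hd xs))" unfolding pol01_def by blast
  qed
next
  assume R: "\<forall>a :: 'a. join_irreducible a \<longrightarrow> polynomial 1 (\<lambda>xs. chi a (hd xs))"
  show "\<forall>n\<ge>1. \<forall>f :: 'a list \<Rightarrow> 'a. aggregation n f \<longleftrightarrow> pol01 n f"
  proof (intro allI impI iffI)
    fix n and f :: "'a list \<Rightarrow> 'a"
    assume "aggregation n f"
    then show "pol01 n f" using agg_poly[OF R] unfolding pol01_def aggregation_def by blast
  next
    fix n and f :: "'a list \<Rightarrow> 'a"
    assume "pol01 n f"
    then obtain p where p: "is_poly n p" "\<forall>xs. length xs = n \<longrightarrow> f xs = p xs"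
      and v: "f (replicate n bot) = bot" "f (replicate n top) = top"
      unfolding pol01_def polynomial_def by blast
    show "aggregation n f" unfolding aggregation_def
    proof (intro conjI allI impI)
      fix xs ys :: "'a list"
      assume "length xs = n" "length ys = n" "list_all2 (\<le>) xs ys"
      then show "f xs \<le> f ys" using p(2) poly_mono[OF p(1)] by metis
    next
      show "f (replicate n bot) = bot" by (rule v(1))
    next
      show "f (replicate n top) = top" by (rule v(2))
    qed
  qed
qed

end
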